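(* Let $A$ be a $\mathrm{C}^*$-algebra and let $a,b\in A_+$ be positive elements such that $ab=0$, $a\in\overline{\mathrm{span}}\,AbA$, and $b$ is soft. Then $a+b$ is soft.
   Context: A positive element $c$ of a $\mathrm{C}^*$-algebra $A$ is called soft if its hereditary sub-$\mathrm{C}^*$-algebra $\overline{cAc}$ has no nonzero unital quotients. $\overline{\mathrm{span}}\,AbA$ denotes the closed two-sided ideal generated by $b$. *)

theory Defs
  imports "HOL-Analysis.Analysis"
begin

text \<open>A (possibly non-unital) C*-algebra structure on a real Banach algebra type 'a:
  sC is the complex scalar multiplication (extending the real one), st is the involution.\<close>

definition cstar_algebra :: "(complex \<Rightarrow> 'a::{banach,real_normed_algebra} \<Rightarrow> 'a) \<Rightarrow> ('a \<Rightarrow> 'a) \<Rightarrow> bool" where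
  "cstar_algebra sC st \<longleftrightarrow>
     (\<forall>r x. sC (complex_of_real r) x = r *\<^sub>R x) \<and>
     (\<forall>c x y. sC c (x + y) = sC c x + sC c y) \<and>
     (\<forall>c d x. sC (c + d) x = sC c x + sC d x) \<and>
     (\<forall>c d x. sC c (sC d x) = sC (c * d) x) \<and>
     (\<forall>x. sC 1 x = x) \<and>
     (\<forall>c x y. sC c (x * y) = sC c x * y) \<and>
     (\<forall>c x y. sC c (x * y) = x * sC c y) \<and>
     (\<forall>c x. norm (sC c x) = cmod c * norm x) \<and>
     (\<forall>x. st (st x) = x) \<and>
     (\<forall>x y. st (x + y) = st x + st y) \<and>
     (\<forall>c x. st (sC c x) = sC (cnj c) (st x)) \<and>
     (\<forall>x y. st (x * y) = st y * st x) \<and>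
     (\<forall>x. norm (st x * x) = (norm x)\<^sup>2)"

text \<open>Positive: self-adjoint with spectrum in [0,oo). The spectrum is computed in the
  unitization: for lambda \<noteq> 0, lambda \<notin> sp(a) iff lambda 1 - a has a two-sided inverse
  (1/lambda) 1 + c with c \<in> A, i.e. lambda c - (1/lambda) a - a c = 0 = lambda c - (1/lambda) a - c a.\<close>
definition positive :: "(complex \<Rightarrow> 'a::{banach,real_normed_algebra} \<Rightarrow> 'a) \<Rightarrow> ('a \<Rightarrow> 'a) \<Rightarrow> 'a \<Rightarrow> bool" where
  "positive sC st a \<longleftrightarrow> st a = a \<and>
     (\<forall>l::complex. \<not> (l \<in> complex_of_real ` {0..}) \<longrightarrow>
        (\<exists>c. sC l c - sC (1 / l) a - a * c = 0 \<and> sC l c - sC (1 / l) a - c * a = 0))"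

definition csubspace :: "(complex \<Rightarrow> 'a::{banach,real_normed_algebra} \<Rightarrow> 'a) \<Rightarrow> 'a set \<Rightarrow> bool" where
  "csubspace sC T \<longleftrightarrow> 0 \<in> T \<and> (\<forall>x\<in>T. \<forall>y\<in>T. x + y \<in> T) \<and> (\<forall>c. \<forall>x\<in>T. sC c x \<in> T)"

definition cspan :: "(complex \<Rightarrow> 'a::{banach,real_normed_algebra} \<Rightarrow> 'a) \<Rightarrow> 'a set \<Rightarrow> 'a set" where
  "cspan sC S = \<Inter>{T. S \<subseteq> T \<and> csubspace sC T}"

definition ideal_gen :: "(complex \<Rightarrow> 'a::{banach,real_normed_algebra} \<Rightarrow> 'a) \<Rightarrow> 'a \<Rightarrow> 'a set" where
  "ideal_gen sC b = closure (cspan sC {x * b * y | x y. True})"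

definition hered :: "'a::{banach,real_normed_algebra} \<Rightarrow> 'a set" where
  "hered c = closure {c * x * c | x. True}"

definition closed_ideal_of :: "(complex \<Rightarrow> 'a::{banach,real_normed_algebra} \<Rightarrow> 'a) \<Rightarrow> 'a set \<Rightarrow> 'a set \<Rightarrow> bool" where
  "closed_ideal_of sC B I \<longleftrightarrow> I \<subseteq> B \<and> csubspace sC I \<and> closed I \<and>
     (\<forall>x\<in>B. \<forall>y\<in>I. x * y \<in> I \<and> y * x \<in> I)"

text \<open>B has a nonzero unital quotient: a closed ideal I \<noteq> B such that B/I has a unit,
  i.e. some e \<in> B with e x - x, x e - x \<in> I for all x \<in> B.\<close>
definition has_nonzero_unital_quotient :: "(complex \<Rightarrow> 'a::{banach,real_normed_algebra} \<Rightarrow> 'a) \<Rightarrow> 'a set \<Rightarrow> bool" where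
  "has_nonzero_unital_quotient sC B \<longleftrightarrow>
     (\<exists>I. closed_ideal_of sC B I \<and> I \<noteq> B \<and> (\<exists>e\<in>B. \<forall>x\<in>B. e * x - x \<in> I \<and> x * e - x \<in> I))"

definition soft :: "(complex \<Rightarrow> 'a::{banach,real_normed_algebra} \<Rightarrow> 'a) \<Rightarrow> ('a \<Rightarrow> 'a) \<Rightarrow> 'a \<Rightarrow> bool" where
  "soft sC st c \<longleftrightarrow> positive sC st c \<and> \<not> has_nonzero_unital_quotient sC (hered c)"

end

theory Submission
  imports Defs
begin

locale cstar =
  fixes sC :: "complex \<Rightarrow> 'a::{banach,real_normed_algebra} \<Rightarrow> 'a" and st :: "'a \<Rightarrow> 'a"
  assumes cs: "cstar_algebra sC st"
begin

lemma sC_real: "sC (complex_of_real r) x = r *\<^sub>R x" using cs unfolding cstar_algebra_def by simp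
lemma sC_addR: "sC c (x + y) = sC c x + sC c y" using cs unfolding cstar_algebra_def by simp
lemma sC_addL: "sC (c + d) x = sC c x + sC d x" using cs unfolding cstar_algebra_def by simp
lemma sC_sC: "sC c (sC d x) = sC (c * d) x" using cs unfolding cstar_algebra_def by simp
lemma sC_one: "sC 1 x = x" using cs unfolding cstar_algebra_def by simp
lemma sC_multL: "sC c (x * y) = sC c x * y" using cs unfolding cstar_algebra_def by simp
lemma sC_multR: "sC c (x * y) = x * sC c y" using cs unfolding cstar_algebra_def by (elim conjE) (rule spec[of _ y, OF spec[of _ x, OF spec[of _ c]]], assumption)
lemma norm_sC: "norm (sC c x) = cmod c * norm x" using cs unfolding cstar_algebra_def by simp
lemma st_st: "st (st x) = x" using cs unfolding cstar_algebra_def by simp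
lemma st_add: "st (x + y) = st x + st y" using cs unfolding cstar_algebra_def by simp
lemma st_sC: "st (sC c x) = sC (cnj c) (st x)" using cs unfolding cstar_algebra_def by simp
lemma st_mult: "st (x * y) = st y * st x" using cs unfolding cstar_algebra_def by simp
lemma cstar_id: "norm (st x * x) = (norm x)\<^sup>2" using cs unfolding cstar_algebra_def by simp

lemma sC_zero[simp]: "sC 0 x = 0" using sC_real[of 0 x] by simp
lemma sC_0[simp]: "sC c 0 = 0" using sC_addR[of c 0 0] by simp
lemma sC_neg: "sC c (- x) = - sC c x"
proof -
  have "sC c x + sC c (-x) = 0" using sC_addR[of c x "-x"] by simp
  hence "- sC c x = sC c (-x)" by (rule add.inverse_unique)
  thus ?thesis by simp
qed
lemma sC_diff: "sC c (x - y) = sC c x - sC c y" by (simp only: diff_conv_add_uminus sC_addR sC_neg)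
lemma sC_negc: "sC (- c) x = - sC c x"
proof -
  have "sC c x + sC (-c) x = 0" using sC_addL[of c "-c" x] by simp
  hence "- sC c x = sC (-c) x" by (rule add.inverse_unique)
  thus ?thesis by simp
qed
lemma sC_diffc: "sC (c - d) x = sC c x - sC d x" using sC_addL[of c "-d" x] by (simp only: sC_negc diff_conv_add_uminus)
lemma sC_sum: "sC c (sum f S) = (\<Sum>i\<in>S. sC c (f i))"
  by (induction S rule: infinite_finite_induct) (auto simp: sC_addR)
lemma sC_scaleR: "sC c (r *\<^sub>R x) = r *\<^sub>R sC c x"
proof -
  have "sC c (r *\<^sub>R x) = sC c (sC (of_real r) x)" by (simp add: sC_real)
  also have "\<dots> = sC (of_real r) (sC c x)" by (simp add: sC_sC mult.commute)
  finally show ?thesis by (simp add: sC_real)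
qed
lemma sC_of_real: "sC (of_real r * c) x = r *\<^sub>R sC c x"
  by (simp only: sC_sC[symmetric] sC_real)

lemma st_0[simp]: "st 0 = 0" using st_add[of 0 0] by simp
lemma st_neg: "st (- x) = - st x"
proof -
  have "st x + st (-x) = 0" using st_add[of x "-x"] by simp
  hence "- st x = st (-x)" by (rule add.inverse_unique)
  thus ?thesis by simp
qed
lemma st_diff: "st (x - y) = st x - st y" by (simp only: diff_conv_add_uminus st_add st_neg)

lemma norm_st_le: "norm x \<le> norm (st x)"
proof (cases "norm x = 0")
  case False
  have "(norm x)^2 \<le> norm (st x) * norm x" using cstar_id[of x] norm_mult_ineq[of "st x" x] by simp
  then show ?thesis using False by (simp add: power2_eq_square)
qed simp
lemma norm_st[simp]: "norm (st x) = norm x"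
  using norm_st_le[of x] norm_st_le[of "st x"] st_st[of x] by simp

lemma sa_sq: "st h = h \<Longrightarrow> norm (h * h) = (norm h)^2" using cstar_id[of h] by simp

definition sq :: "nat \<Rightarrow> 'a \<Rightarrow> 'a" where "sq k x = ((\<lambda>y. y * y) ^^ k) x"
lemma sq_0[simp]: "sq 0 x = x" by (simp add: sq_def)
lemma sq_Suc: "sq (Suc k) x = sq k x * sq k x" by (simp add: sq_def)
lemma sq_Suc': "sq (Suc k) x = sq k (x * x)" by (simp add: sq_def funpow_Suc_right del: funpow.simps)

lemma norm_sq: "st h = h \<Longrightarrow> st (sq k h) = sq k h \<and> norm (sq k h) = (norm h)^(2^k)"
proof (induction k)
  case (Suc k)
  then have IH: "st (sq k h) = sq k h" "norm (sq k h) = norm h ^ 2 ^ k" by auto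
  have "norm (sq (Suc k) h) = (norm h ^ 2 ^ k)^2" unfolding sq_Suc by (simp only: sa_sq IH)
  also have "\<dots> = norm h ^ 2 ^ Suc k" proof -
    have "(2::nat) ^ Suc k = 2^k * 2" by simp
    then show ?thesis by (simp only: power_mult)
  qed
  finally have "norm (sq (Suc k) h) = norm h ^ 2 ^ Suc k" .
  moreover have "st (sq (Suc k) h) = sq (Suc k) h" unfolding sq_Suc st_mult IH by (rule refl)
  ultimately show ?case by blast
qed simp

end

definition rqi :: "'a::ring \<Rightarrow> 'a \<Rightarrow> bool" where "rqi y r \<longleftrightarrow> r - y - y * r = 0"
definition lqi :: "'a::ring \<Rightarrow> 'a \<Rightarrow> bool" where "lqi y r \<longleftrightarrow> r - y - r * y = 0"
definition QI :: "'a::ring \<Rightarrow> 'a \<Rightarrow> bool" where "QI y r \<longleftrightarrow> rqi y r \<and> lqi y r"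

lemma rqiD: "rqi y r \<Longrightarrow> r = y + y * r" unfolding rqi_def by (simp add: algebra_simps)
lemma lqiD: "lqi y r \<Longrightarrow> r = y + r * y" unfolding lqi_def by (simp add: algebra_simps)
lemma rqiI: "r = y + y * r \<Longrightarrow> rqi y r" unfolding rqi_def by (simp add: algebra_simps)
lemma lqiI: "r = y + r * y \<Longrightarrow> lqi y r" unfolding lqi_def by (simp add: algebra_simps)

lemma qi_uniq:
  fixes y r r' :: "'a::ring"
  assumes "rqi y r" "lqi y r'" shows "r = r'"
proof -
  have 1: "r = y + y * r" using assms(1) by (rule rqiD)
  have 2: "r' = y + r' * y" using assms(2) by (rule lqiD)
  have "r' * r = r' * y + r' * y * r" by (subst 1) (simp add: algebra_simps)
  moreover have "r' * r = y * r + r' * y * r" by (subst 2) (simp add: algebra_simps)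
  ultimately have "r' * y = y * r" by simp
  then show ?thesis using 1 2 by simp
qed

lemma QI_unique: "QI y r \<Longrightarrow> QI y r' \<Longrightarrow> r = r'"
  unfolding QI_def using qi_uniq by blast

lemma QI_pair:
  fixes y q1 q2 :: "'a::real_algebra"
  assumes "QI y q1" "QI (- y) q2"
  shows "QI (y * y) ((1/2) *\<^sub>R (q1 + q2))"
proof -
  have r1: "q1 = y + y * q1" and l1: "q1 = y + q1 * y" using assms(1) unfolding QI_def by (auto dest: rqiD lqiD)
  have r2: "q2 = - y - y * q2" and l2: "q2 = - y - q2 * y" using assms(2) unfolding QI_def
    by (auto dest!: rqiD lqiD simp: algebra_simps)
  have yq1: "y * q1 = q1 - y" using r1 by (metis add_diff_cancel_left')
  have yq2: "y * q2 = - y - q2" using r2 by (metis add_diff_cancel_left' diff_conv_add_uminus minus_diff_eq add.commute)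
  have q1y: "q1 * y = q1 - y" using l1 by (metis add_diff_cancel_left')
  have q2y: "q2 * y = - y - q2" using l2 by (metis add_diff_cancel_left' diff_conv_add_uminus minus_diff_eq add.commute)
  have a: "y * (q1 + q2) = q1 - q2 - 2 *\<^sub>R y"
  proof -
    have "y * (q1 + q2) = y * q1 + y * q2" by (simp add: algebra_simps)
    also have "\<dots> = (q1 - y) + (- y - q2)" by (simp only: yq1 yq2)
    finally show ?thesis by (simp add: algebra_simps scaleR_2)
  qed
  have b: "y * (q1 - q2) = q1 + q2"
  proof -
    have "y * (q1 - q2) = y * q1 - y * q2" by (simp add: algebra_simps)
    also have "\<dots> = (q1 - y) - (- y - q2)" by (simp only: yq1 yq2)
    finally show ?thesis by (simp add: algebra_simps)
  qed
  have "y * y * (q1 + q2) = y * (y * (q1 + q2))" by (simp add: mult.assoc)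
  also have "\<dots> = y * (q1 - q2) - 2 *\<^sub>R (y * y)" unfolding a by (simp add: algebra_simps)
  also have "\<dots> = q1 + q2 - 2 *\<^sub>R (y * y)" unfolding b ..
  finally have "y * y * (q1 + q2) = q1 + q2 - 2 *\<^sub>R (y * y)" .
  hence "y * y * ((1/2) *\<^sub>R (q1 + q2)) = (1/2) *\<^sub>R (q1 + q2) - y * y"
    by (simp add: mult_scaleR_right scaleR_diff_right)
  hence R: "rqi (y * y) ((1/2) *\<^sub>R (q1 + q2))" unfolding rqi_def by simp
  have a': "(q1 + q2) * y = q1 - q2 - 2 *\<^sub>R y"
  proof -
    have "(q1 + q2) * y = q1 * y + q2 * y" by (simp add: algebra_simps)
    also have "\<dots> = (q1 - y) + (- y - q2)" by (simp only: q1y q2y)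
    finally show ?thesis by (simp add: algebra_simps scaleR_2)
  qed
  have b': "(q1 - q2) * y = q1 + q2"
  proof -
    have "(q1 - q2) * y = q1 * y - q2 * y" by (simp add: algebra_simps)
    also have "\<dots> = (q1 - y) - (- y - q2)" by (simp only: q1y q2y)
    finally show ?thesis by (simp add: algebra_simps)
  qed
  have "(q1 + q2) * y * y = (q1 - q2) * y - 2 *\<^sub>R (y * y)" unfolding a' by (simp add: algebra_simps)
  also have "\<dots> = q1 + q2 - 2 *\<^sub>R (y * y)" unfolding b' ..
  finally have "(q1 + q2) * y * y = q1 + q2 - 2 *\<^sub>R (y * y)" .
  hence "((1/2) *\<^sub>R (q1 + q2)) * (y * y) = (1/2) *\<^sub>R (q1 + q2) - y * y"
    by (simp add: mult_scaleR_left scaleR_diff_right mult.assoc)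
  hence L: "lqi (y * y) ((1/2) *\<^sub>R (q1 + q2))" unfolding lqi_def by simp
  show ?thesis using R L unfolding QI_def by blast
qed

lemma res_id:
  fixes X Y q1 q2 :: "'a::ring"
  assumes "QI X q1" "QI Y q2"
  shows "q1 - q2 = (X - Y) + q1 * (X - Y) + (X - Y) * q2 + q1 * (X - Y) * q2"
proof -
  have l1: "q1 = X + q1 * X" using assms(1) unfolding QI_def by (auto dest: lqiD)
  have r2: "q2 = Y + Y * q2" using assms(2) unfolding QI_def by (auto dest: rqiD)
  have "(X - Y) + q1 * (X - Y) + (X - Y) * q2 + q1 * (X - Y) * q2
      = (X + q1 * X) + (X + q1 * X) * q2 - (Y + Y * q2) - q1 * (Y + Y * q2)"
    by (simp add: algebra_simps)
  also have "\<dots> = q1 + q1 * q2 - q2 - q1 * q2" using l1[symmetric] r2[symmetric] by simp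
  finally show ?thesis by simp
qed

lemma res_norm:
  fixes X Y q1 q2 :: "'a::real_normed_algebra"
  assumes "QI X q1" "QI Y q2"
  shows "norm (q1 - q2) \<le> norm (X - Y) * ((1 + norm q1) * (1 + norm q2))"
proof -
  let ?d = "X - Y"
  have "norm (q1 - q2) \<le> norm ?d + norm (q1 * ?d) + norm (?d * q2) + norm (q1 * ?d * q2)"
    unfolding res_id[OF assms] by (intro order.trans[OF norm_triangle_ineq] add_right_mono) (auto intro: norm_triangle_le)
  also have "\<dots> \<le> norm ?d + norm q1 * norm ?d + norm ?d * norm q2 + norm q1 * norm ?d * norm q2"
    by (intro add_mono norm_mult_ineq order.refl order.trans[OF norm_mult_ineq] mult_right_mono) auto
  also have "\<dots> = norm ?d * ((1 + norm q1) * (1 + norm q2))" by (simp add: algebra_simps)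
  finally show ?thesis .
qed


lemma sum_split2: "(\<Sum>j<N+N. f j) = (\<Sum>j<N. f j + f (j + (N::nat)))"
proof -
  have "(\<Sum>j<N+N. f j) = sum f {0..<N} + sum f {N..<N+N}"
    by (simp add: sum.atLeastLessThan_concat lessThan_atLeast0)
  also have "sum f {N..<N+N} = (\<Sum>j\<in>{0..<N}. f (j + N))"
    using sum.shift_bounds_nat_ivl[of f 0 N N] by simp
  finally show ?thesis by (simp add: sum.distrib lessThan_atLeast0)
qed

context cstar begin

definition Qf :: "'a \<Rightarrow> complex \<Rightarrow> 'a" where "Qf x z = (SOME r. QI (sC z x) r)"

lemma QfI: "QI (sC z x) r \<Longrightarrow> QI (sC z x) (Qf x z)" unfolding Qf_def by (rule someI)
lemma Qf_eq: "QI (sC z x) r \<Longrightarrow> Qf x z = r" using QfI QI_unique by blast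

lemma sC_sq: "sC z x * sC z x = sC (z^2) (x * x)"
proof -
  have "sC z x * sC z x = sC z (x * sC z x)" by (simp add: sC_multL)
  also have "\<dots> = sC z (sC z (x * x))" by (simp add: sC_multR)
  finally show ?thesis by (simp add: sC_sC power2_eq_square)
qed

lemma pair_sC: "QI (sC z x) q1 \<Longrightarrow> QI (sC (-z) x) q2 \<Longrightarrow> QI (sC (z^2) (x*x)) ((1/2) *\<^sub>R (q1 + q2))"
  using QI_pair[of "sC z x" q1 q2] by (simp add: sC_negc sC_sq)

definition avg :: "nat \<Rightarrow> 'a \<Rightarrow> complex \<Rightarrow> 'a" where
  "avg k x \<nu> = (1 / 2^k) *\<^sub>R (\<Sum>j<(2::nat)^k. Qf x (cis (2 * pi * real j / 2^k) * \<nu>))"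

lemma avg_QI:
  "(\<forall>z. cmod z = cmod \<nu> \<longrightarrow> (\<exists>r. QI (sC z x) r)) \<Longrightarrow> QI (sC (\<nu>^(2^k)) (sq k x)) (avg k x \<nu>)"
proof (induction k arbitrary: x \<nu>)
  case 0
  then obtain r where "QI (sC \<nu> x) r" by blast
  then show ?case by (simp add: avg_def QfI)
next
  case (Suc k)
  define N :: nat where "N = 2^k"
  define z where "z j = cis (2 * pi * real j / 2^Suc k) * \<nu>" for j :: nat
  have zN: "z (j + N) = - z j" for j
  proof -
    have "2 * pi * real (j + N) / 2^Suc k = 2 * pi * real j / 2^Suc k + pi"
      by (simp add: N_def field_simps)
    then show ?thesis by (simp add: z_def cis_mult[symmetric])
  qed
  have zsq: "(z j)^2 = cis (2 * pi * real j / 2^k) * \<nu>^2" for j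
  proof -
    have "(cis (2 * pi * real j / 2^Suc k))^2 = cis (real 2 * (2 * pi * real j / 2^Suc k))"
      by (rule Complex.DeMoivre)
    also have "real 2 * (2 * pi * real j / 2^Suc k) = 2 * pi * real j / 2^k" by simp
    finally have "(cis (2 * pi * real j / 2^Suc k))^2 = cis (2 * pi * real j / 2^k)" .
    then show ?thesis by (simp add: z_def power_mult_distrib)
  qed
  have cz: "cmod (z j) = cmod \<nu>" for j by (simp add: z_def norm_mult)
  have pr: "Qf (x*x) ((z j)^2) = (1/2) *\<^sub>R (Qf x (z j) + Qf x (- z j))" for j
  proof -
    obtain r1 where "QI (sC (z j) x) r1" using Suc.prems cz by blast
    moreover have "cmod (- z j) = cmod \<nu>" using cz by simp
    then obtain r2 where "QI (sC (- z j) x) r2" using Suc.prems by blast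
    ultimately show ?thesis by (intro Qf_eq pair_sC) (auto intro: QfI)
  qed
  have NN: "(2::nat)^Suc k = N + N" by (simp add: N_def)
  have "avg (Suc k) x \<nu> = (1 / 2^Suc k) *\<^sub>R (\<Sum>j<2^Suc k. Qf x (z j))"
    by (simp only: avg_def z_def)
  also have "\<dots> = (1 / 2^Suc k) *\<^sub>R (\<Sum>j<N+N. Qf x (z j))" by (simp only: NN)
  also have "\<dots> = (1 / 2^k) *\<^sub>R (\<Sum>j<N. (1/2) *\<^sub>R (Qf x (z j) + Qf x (- z j)))"
    unfolding sum_split2 zN scaleR_sum_right[symmetric] scaleR_scaleR by (simp add: N_def)
  also have "\<dots> = avg k (x*x) (\<nu>^2)"
    unfolding avg_def N_def by (simp add: pr[symmetric] zsq)
  finally have E: "avg (Suc k) x \<nu> = avg k (x*x) (\<nu>^2)" .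
  have H: "\<forall>z. cmod z = cmod (\<nu>^2) \<longrightarrow> (\<exists>r. QI (sC z (x*x)) r)"
  proof (intro allI impI)
    fix w assume w: "cmod w = cmod (\<nu>^2)"
    have cw: "cmod (csqrt w) = cmod \<nu>" using w by (simp add: norm_power)
    obtain r1 where "QI (sC (csqrt w) x) r1" using Suc.prems cw by blast
    moreover have "cmod (- csqrt w) = cmod \<nu>" using cw by simp
    then obtain r2 where "QI (sC (- csqrt w) x) r2" using Suc.prems by blast
    ultimately have "QI (sC ((csqrt w)^2) (x*x)) ((1/2) *\<^sub>R (r1 + r2))" by (rule pair_sC)
    then show "\<exists>r. QI (sC w (x*x)) r" by auto
  qed
  have "(\<nu>^2)^(2^k) = \<nu>^(2^Suc k)" by (simp add: power_mult[symmetric] mult.commute)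
  then show ?case using Suc.IH[OF H] by (simp add: E sq_Suc')
qed

end

context cstar begin

lemma norm_sC_diff: "norm (sC z x - sC w x) = cmod (z - w) * norm x"
  by (simp add: sC_diffc[symmetric] norm_sC)

lemma Qf_cont:
  fixes R :: real
  assumes ex: "\<forall>z\<in>cball (0::complex) R. \<exists>r. QI (sC z x) r"
  shows "continuous_on (cball (0::complex) R) (Qf x)"
  unfolding continuous_on_iff
proof (intro ballI allI impI)
  fix \<eta> :: complex and e :: real
  assume \<eta>: "\<eta> \<in> cball (0::complex) R" and e: "0 < e"
  define q2 where "q2 = Qf x \<eta>"
  have Q2: "QI (sC \<eta> x) q2" using ex \<eta> QfI unfolding q2_def by blast
  define K where "K = 1 + norm q2"
  define nx where "nx = norm x + 1"
  have K: "K \<ge> 1" unfolding K_def by simp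
  have nx: "nx \<ge> 1" unfolding nx_def by simp
  define d where "d = min (1 / (2 * K * nx)) (e / (4 * K * K * nx))"
  have d: "d > 0" using K nx e unfolding d_def by auto
  show "\<exists>d>0. \<forall>z\<in>cball (0::complex) R. dist z \<eta> < d \<longrightarrow> dist (Qf x z) (Qf x \<eta>) < e"
  proof (intro exI[of _ d] conjI d ballI impI)
    fix z assume z: "z \<in> cball (0::complex) R" and dz: "dist z \<eta> < d"
    define q1 where "q1 = Qf x z"
    have Q1: "QI (sC z x) q1" using ex z QfI unfolding q1_def by blast
    define D where "D = cmod (z - \<eta>) * norm x"
    have D0: "D \<ge> 0" unfolding D_def by simp
    have Dd: "D \<le> d * nx"
    proof -
      have "D \<le> cmod (z - \<eta>) * nx" unfolding D_def nx_def by (intro mult_left_mono) auto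
      also have "\<dots> \<le> d * nx" using dz nx by (intro mult_right_mono) (auto simp: dist_norm)
      finally show ?thesis .
    qed
    have main: "norm (q1 - q2) \<le> D * ((1 + norm q1) * K)"
      using res_norm[OF Q1 Q2] unfolding norm_sC_diff D_def K_def .
    have DK: "D * K \<le> 1/2"
    proof -
      have "D * K \<le> d * nx * K" using Dd K by (intro mult_right_mono) auto
      also have "\<dots> \<le> 1 / (2 * K * nx) * nx * K" using K nx unfolding d_def
        by (intro mult_right_mono) auto
      also have "\<dots> = 1/2" using K nx by (simp add: field_simps)
      finally show ?thesis .
    qed
    have "norm q1 \<le> norm q2 + norm (q1 - q2)" by (metis norm_triangle_sub)
    also have "\<dots> \<le> norm q2 + (D * K) * (1 + norm q1)" using main by (simp add: algebra_simps)
    also have "\<dots> \<le> norm q2 + (1/2) * (1 + norm q1)"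
      using DK by (intro add_left_mono mult_right_mono) auto
    finally have "norm q1 \<le> 2 * norm q2 + 1" by (simp add: field_simps)
    hence nq1: "1 + norm q1 \<le> 2 * K" unfolding K_def by simp
    have "norm (q1 - q2) \<le> D * ((1 + norm q1) * K)" by (rule main)
    also have "\<dots> \<le> D * (2 * K * K)" using nq1 K D0 by (intro mult_left_mono mult_right_mono) auto
    also have "\<dots> \<le> d * nx * (2 * K * K)" using Dd K by (intro mult_right_mono) auto
    also have "\<dots> \<le> e / (4 * K * K * nx) * nx * (2 * K * K)" using K nx unfolding d_def
      by (intro mult_right_mono) auto
    also have "\<dots> = e / 2" using K nx by (simp add: field_simps)
    also have "\<dots> < e" using e by simp
    finally show "dist (Qf x z) (Qf x \<eta>) < e" unfolding q1_def q2_def dist_norm .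
  qed
qed

lemma Qf_lip:
  fixes R :: real
  assumes ex: "\<forall>z\<in>cball (0::complex) R. \<exists>r. QI (sC z x) r"
  shows "\<exists>L\<ge>0. \<forall>z\<in>cball (0::complex) R. \<forall>w\<in>cball (0::complex) R. norm (Qf x z - Qf x w) \<le> L * cmod (z - w)"
proof -
  have "compact (Qf x ` cball (0::complex) R)"
    by (rule compact_continuous_image[OF Qf_cont[OF ex] compact_cball])
  then obtain M where M: "\<forall>y\<in>Qf x ` cball (0::complex) R. norm y \<le> M"
    using compact_imp_bounded bounded_iff by metis
  define M' where "M' = max M 0"
  have M': "\<forall>z\<in>cball (0::complex) R. norm (Qf x z) \<le> M'" "M' \<ge> 0" using M unfolding M'_def by force+
  show ?thesis
  proof (intro exI[of _ "norm x * ((1 + M') * (1 + M'))"] conjI ballI)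
    show "0 \<le> norm x * ((1 + M') * (1 + M'))" using M' by simp
    fix z w assume z: "z \<in> cball (0::complex) R" and w: "w \<in> cball (0::complex) R"
    have Q1: "QI (sC z x) (Qf x z)" using ex z QfI by blast
    have Q2: "QI (sC w x) (Qf x w)" using ex w QfI by blast
    have "norm (Qf x z - Qf x w) \<le> cmod (z - w) * norm x * ((1 + norm (Qf x z)) * (1 + norm (Qf x w)))"
      using res_norm[OF Q1 Q2] unfolding norm_sC_diff .
    also have "\<dots> \<le> cmod (z - w) * norm x * ((1 + M') * (1 + M'))"
      using M' z w by (intro mult_left_mono mult_mono) auto
    finally show "norm (Qf x z - Qf x w) \<le> norm x * ((1 + M') * (1 + M')) * cmod (z - w)"
      by (simp add: algebra_simps)
  qed
qed

end

lemma QI_norm1: fixes a g :: "'a::real_normed_algebra" assumes "QI a g" shows "norm g \<le> norm a + norm a * norm g"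
proof -
  have "g = a + a * g" using assms unfolding QI_def by (auto dest: rqiD)
  hence "norm g = norm (a + a * g)" by simp
  also have "\<dots> \<le> norm a + norm (a * g)" by (rule norm_triangle_ineq)
  also have "\<dots> \<le> norm a + norm a * norm g" by (simp add: norm_mult_ineq)
  finally show ?thesis .
qed

lemma QI_norm2: fixes a g :: "'a::real_normed_algebra" assumes "QI a g" shows "norm a \<le> norm g + norm a * norm g"
proof -
  have "g = a + a * g" using assms unfolding QI_def by (auto dest: rqiD)
  hence "a = g - a * g" by (simp add: algebra_simps)
  hence "norm a = norm (g - a * g)" by simp
  also have "\<dots> \<le> norm g + norm (a * g)" by (rule norm_triangle_ineq4)
  also have "\<dots> \<le> norm g + norm a * norm g" by (simp add: norm_mult_ineq)
  finally show ?thesis .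
qed

context cstar begin

lemma SR:
  fixes R :: real
  assumes sa: "st x = x" and R: "R > 0" and ex: "\<forall>z\<in>cball (0::complex) R. \<exists>r. QI (sC z x) r"
  shows "R * norm x < 1"
proof -
  obtain L where L0: "L \<ge> 0" and L: "\<forall>z\<in>cball (0::complex) R. \<forall>w\<in>cball 0 R. norm (Qf x z - Qf x w) \<le> L * cmod (z - w)"
    using Qf_lip[OF ex] by blast
  define \<delta> where "\<delta> = 1 / (12 * (L + 1))"
  have \<delta>0: "\<delta> > 0" using L0 unfolding \<delta>_def by simp
  have L\<delta>: "L * \<delta> \<le> 1/12" using L0 unfolding \<delta>_def by (simp add: field_simps)
  define g where "g k \<rho> = avg k x (complex_of_real \<rho>)" for k \<rho>
  define a where "a k \<rho> = (\<rho>^(2^k)) *\<^sub>R sq k x" for k and \<rho> :: real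
  have gQI: "QI (a k \<rho>) (g k \<rho>)" if "0 \<le> \<rho>" "\<rho> \<le> R" for k \<rho>
  proof -
    have "\<forall>z. cmod z = cmod (complex_of_real \<rho>) \<longrightarrow> (\<exists>r. QI (sC z x) r)"
      using ex that by auto
    from avg_QI[OF this, of k] show ?thesis
      unfolding g_def a_def by (simp add: sC_real of_real_power[symmetric] del: of_real_power)
  qed
  have na: "norm (a k \<rho>) = (\<rho> * norm x)^(2^k)" if "0 \<le> \<rho>" for k \<rho>
    using norm_sq[OF sa, of k] that unfolding a_def by (simp add: power_mult_distrib)
  have glip: "norm (g k \<rho> - g k \<rho>') \<le> L * \<bar>\<rho> - \<rho>'\<bar>"
    if "0 \<le> \<rho>" "\<rho> \<le> R" "0 \<le> \<rho>'" "\<rho>' \<le> R" for k \<rho> \<rho>'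
  proof -
    define c where "c j = cis (2 * pi * real j / 2^k)" for j :: nat
    have cc: "cmod (c j * complex_of_real r) = \<bar>r\<bar>" for j r by (simp add: c_def norm_mult)
    have eq: "g k \<rho> - g k \<rho>' = (1 / 2^k) *\<^sub>R (\<Sum>j<(2::nat)^k. Qf x (c j * \<rho>) - Qf x (c j * \<rho>'))"
      unfolding g_def avg_def c_def by (simp add: sum_subtractf scaleR_diff_right)
    have "norm (g k \<rho> - g k \<rho>') = (1 / 2^k) * norm (\<Sum>j<(2::nat)^k. Qf x (c j * \<rho>) - Qf x (c j * \<rho>'))"
      unfolding eq norm_scaleR by simp
    also have "\<dots> \<le> (1 / 2^k) * (\<Sum>j<(2::nat)^k. norm (Qf x (c j * \<rho>) - Qf x (c j * \<rho>')))"
      by (intro mult_left_mono norm_sum) simp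
    also have "\<dots> \<le> (1 / 2^k) * (\<Sum>j<(2::nat)^k. L * \<bar>\<rho> - \<rho>'\<bar>)"
    proof (intro mult_left_mono sum_mono)
      fix j
      have "norm (Qf x (c j * \<rho>) - Qf x (c j * \<rho>')) \<le> L * cmod (c j * \<rho> - c j * \<rho>')"
        using L cc that by auto
      also have "cmod (c j * \<rho> - c j * \<rho>') = \<bar>\<rho> - \<rho>'\<bar>"
        using cc[of j "\<rho> - \<rho>'"] by (simp add: algebra_simps)
      finally show "norm (Qf x (c j * \<rho>) - Qf x (c j * \<rho>')) \<le> L * \<bar>\<rho> - \<rho>'\<bar>" .
    qed simp
    also have "\<dots> = L * \<bar>\<rho> - \<rho>'\<bar>" by simp
    finally show ?thesis .
  qed
  have step: "\<rho>' * norm x < 1" if IH: "\<rho> * norm x < 1" and r: "0 \<le> \<rho>" "\<rho> \<le> R" "0 \<le> \<rho>'" "\<rho>' \<le> R"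
      and d: "\<bar>\<rho> - \<rho>'\<bar> \<le> \<delta>" for \<rho> \<rho>'
  proof -
    define s where "s = \<rho> * norm x"
    have s: "0 \<le> s" "s < 1" using IH r unfolding s_def by auto
    have "(\<lambda>m. s ^ m) \<longlonglongrightarrow> 0" using s by (intro LIMSEQ_power_zero) auto
    hence "eventually (\<lambda>m. s ^ m < 1/24) sequentially" by (rule order_tendstoD(2)) simp
    then obtain m where m: "s ^ m < 1/24" by (auto simp: eventually_sequentially)
    have "s ^ (2^m) \<le> s ^ m" using s by (intro power_decreasing) (auto intro: less_imp_le[OF less_exp])
    hence sm: "s ^ (2^m) \<le> 1/24" using m by simp
    have A: "norm (a m \<rho>) \<le> 1/24" using na[OF r(1)] sm unfolding s_def by simp
    have G1: "norm (g m \<rho>) \<le> norm (a m \<rho>) + norm (a m \<rho>) * norm (g m \<rho>)" by (rule QI_norm1[OF gQI[OF r(1,2)]])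
    have "norm (g m \<rho>) \<le> 1/24 + 1/24 * norm (g m \<rho>)"
      using G1 A by (smt (verit, best) mult_right_mono norm_ge_zero)
    hence G: "norm (g m \<rho>) \<le> 1/12" by simp
    have "norm (g m \<rho>') \<le> norm (g m \<rho>) + norm (g m \<rho> - g m \<rho>')" by (metis norm_triangle_sub add.commute norm_minus_commute)
    also have "\<dots> \<le> 1/12 + L * \<bar>\<rho> - \<rho>'\<bar>" using G glip[OF r, of m] by linarith
    also have "\<dots> \<le> 1/12 + L * \<delta>" using d L0 by (simp add: mult_left_mono)
    also have "\<dots> \<le> 1/6" using L\<delta> by simp
    finally have G': "norm (g m \<rho>') \<le> 1/6" .
    have A2: "norm (a m \<rho>') \<le> norm (g m \<rho>') + norm (a m \<rho>') * norm (g m \<rho>')" by (rule QI_norm2[OF gQI[OF r(3,4)]])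
    have "norm (a m \<rho>') \<le> 1/6 + norm (a m \<rho>') * (1/6)"
      using A2 G' by (smt (verit, best) mult_left_mono norm_ge_zero)
    hence "norm (a m \<rho>') < 1" by simp
    hence "(\<rho>' * norm x)^(2^m) < 1" using na[OF r(3)] by simp
    thus ?thesis using r(3) by (meson linorder_not_le one_le_power)
  qed
  have claim: "\<forall>\<rho>. 0 \<le> \<rho> \<longrightarrow> \<rho> \<le> R \<longrightarrow> \<rho> \<le> real n * \<delta> \<longrightarrow> \<rho> * norm x < 1" for n
  proof (induction n)
    case 0 then show ?case by auto
  next
    case (Suc n)
    show ?case
    proof (intro allI impI)
      fix \<rho>' assume r': "0 \<le> \<rho>'" "\<rho>' \<le> R" "\<rho>' \<le> real (Suc n) * \<delta>"
      define \<rho> where "\<rho> = max 0 (\<rho>' - \<delta>)"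
      have r: "0 \<le> \<rho>" "\<rho> \<le> R" "\<rho> \<le> real n * \<delta>" using r' \<delta>0 unfolding \<rho>_def by (auto simp: algebra_simps)
      have d: "\<bar>\<rho> - \<rho>'\<bar> \<le> \<delta>" using r' \<delta>0 unfolding \<rho>_def by auto
      show "\<rho>' * norm x < 1" using step[OF Suc[rule_format, OF r] r(1,2) r'(1,2) d] .
    qed
  qed
  obtain n where "R \<le> real n * \<delta>"
    using \<delta>0 by (metis real_arch_simple mult.commute pos_divide_le_eq)
  then show ?thesis using claim[of n] R by auto
qed

end

lemma qi_comp_r:
  fixes X Y Z q' :: "'a::ring"
  assumes "X + Y - Y * X = Z" "rqi Z q'"
  shows "rqi Y (q' - X - X * q')"
proof -
  have q': "q' - Z - Z * q' = 0" using assms(2) unfolding rqi_def .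
  have "(q' - X - X * q') - Y - Y * (q' - X - X * q') = q' - (X + Y - Y * X) - (X + Y - Y * X) * q'"
    by (simp add: algebra_simps)
  also have "\<dots> = 0" unfolding assms(1) by (rule q')
  finally show ?thesis unfolding rqi_def .
qed

lemma qi_comp_l:
  fixes X Y Z q' :: "'a::ring"
  assumes "X + Y - X * Y = Z" "lqi Z q'"
  shows "lqi Y (q' - X - q' * X)"
proof -
  have q': "q' - Z - q' * Z = 0" using assms(2) unfolding lqi_def .
  have "(q' - X - q' * X) - Y - (q' - X - q' * X) * Y = q' - (X + Y - X * Y) - q' * (X + Y - X * Y)"
    by (simp add: algebra_simps)
  also have "\<dots> = 0" unfolding assms(1) by (rule q')
  finally show ?thesis unfolding lqi_def .
qed

context cstar begin

lemma pos_QI: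
  assumes p: "positive sC st p" and mu: "\<mu> \<notin> complex_of_real ` {0<..}"
  shows "\<exists>q. QI (sC \<mu> p) q"
proof (cases "\<mu> = 0")
  case True
  then show ?thesis by (intro exI[of _ 0]) (simp add: QI_def rqi_def lqi_def)
next
  case False
  define l where "l = 1 / \<mu>"
  have l0: "l \<noteq> 0" using False unfolding l_def by simp
  have "l \<notin> complex_of_real ` {0..}"
  proof
    assume "l \<in> complex_of_real ` {0..}"
    then obtain s where s: "s \<ge> 0" "l = complex_of_real s" by auto
    hence "s > 0" using l0 by auto
    moreover have "\<mu> = 1 / l" unfolding l_def by simp
    hence "\<mu> = complex_of_real (1 / s)" using s by simp
    ultimately have "\<mu> \<in> complex_of_real ` {0<..}" by (intro image_eqI[of _ _ "1/s"]) auto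
    thus False using mu by blast
  qed
  then obtain c where c1: "sC l c - sC (1 / l) p - p * c = 0" and c2: "sC l c - sC (1 / l) p - c * p = 0"
    using p unfolding positive_def by blast
  have mu_l: "1 / l = \<mu>" unfolding l_def by simp
  have e1: "sC \<mu> p * sC l c = p * c"
    by (simp add: sC_multL[symmetric] sC_multR[symmetric] sC_sC) (simp add: l_def False sC_one)
  have e2: "sC l c * sC \<mu> p = c * p"
    by (simp add: sC_multL[symmetric] sC_multR[symmetric] sC_sC) (simp add: l_def False sC_one)
  show ?thesis
  proof (intro exI[of _ "sC l c"])
    show "QI (sC \<mu> p) (sC l c)" unfolding QI_def rqi_def lqi_def e1 e2
      using c1 c2 unfolding mu_l by simp
  qed
qed

lemma QI_st:
  assumes "st X = X" "QI X q" shows "st q = q"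
proof -
  have r: "q - X - X * q = 0" and l: "q - X - q * X = 0" using assms(2) unfolding QI_def rqi_def lqi_def by auto
  have "st (q - X - X * q) = 0" using r by simp
  hence l': "st q - X - st q * X = 0" by (simp add: st_diff st_mult assms(1))
  have "st (q - X - q * X) = 0" using l by simp
  hence r': "st q - X - X * st q = 0" by (simp add: st_diff st_mult assms(1))
  have "QI X (st q)" using l' r' unfolding QI_def rqi_def lqi_def by auto
  then show ?thesis using QI_unique assms(2) by blast
qed

lemma st_sC_real: "st p = p \<Longrightarrow> st (sC (complex_of_real r) p) = sC (complex_of_real r) p"
  by (simp add: st_sC)

lemma q_bound:
  assumes p: "positive sC st p" and t: "t > 0" and Q: "QI (sC (complex_of_real (- 1 / t)) p) q"
  shows "norm q < 2"
proof -
  define X where "X = sC (complex_of_real (- 1 / t)) p"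
  have sp: "st p = p" using p unfolding positive_def by blast
  have sX: "st X = X" unfolding X_def using st_sC_real[OF sp] .
  have QX: "QI X q" using Q unfolding X_def .
  have sq: "st q = q" by (rule QI_st[OF sX QX])
  have qX: "q = X + X * q" "q = X + q * X" using QX unfolding QI_def by (auto dest: rqiD lqiD)
  have ex: "\<forall>z\<in>cball (0::complex) (1/2). \<exists>r. QI (sC z q) r"
  proof
    fix z :: complex assume z: "z \<in> cball 0 (1/2)"
    define Z where "Z = sC (1 + z) X"
    have "(1 + z) * complex_of_real (- 1 / t) \<notin> complex_of_real ` {0<..}"
    proof
      assume "(1 + z) * complex_of_real (- 1 / t) \<in> complex_of_real ` {0<..}"
      then obtain s where s: "s > 0" "(1 + z) * complex_of_real (- 1 / t) = complex_of_real s" by auto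
      hence "Re ((1 + z) * complex_of_real (- 1 / t)) = s" by simp
      hence e: "(1 + Re z) * (- 1 / t) = s" by simp
      have "Re z \<ge> - 1/2" using z abs_Re_le_cmod[of z] by (auto simp: dist_norm)
      hence "(1 + Re z) / t > 0" using t by simp
      moreover have "(1 + Re z) * (- 1 / t) = - ((1 + Re z) / t)" by simp
      ultimately show False using e s by linarith
    qed
    then obtain q' where q': "QI (sC ((1 + z) * complex_of_real (- 1 / t)) p) q'" using pos_QI[OF p] by blast
    have QZ: "QI Z q'" using q' unfolding Z_def X_def by (simp add: sC_sC)
    have Zeq: "Z = X + sC z X" unfolding Z_def by (simp add: sC_addL sC_one)
    have YX: "sC z q * X = sC z q - sC z X"
    proof -
      have "sC z q * X = sC z (q * X)" by (simp add: sC_multL)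
      also have "q * X = q - X" using qX(2) by (simp add: algebra_simps)
      finally show ?thesis by (simp add: sC_diff)
    qed
    have XY: "X * sC z q = sC z q - sC z X"
    proof -
      have "X * sC z q = sC z (X * q)" by (simp add: sC_multR)
      also have "X * q = q - X" using qX(1) by (simp add: algebra_simps)
      finally show ?thesis by (simp add: sC_diff)
    qed
    have R: "rqi (sC z q) (q' - X - X * q')"
      by (rule qi_comp_r) (use QZ in \<open>auto simp: QI_def YX Zeq\<close>)
    have L: "lqi (sC z q) (q' - X - q' * X)"
      by (rule qi_comp_l) (use QZ in \<open>auto simp: QI_def XY Zeq\<close>)
    have "q' - X - X * q' = q' - X - q' * X" by (rule qi_uniq[OF R L])
    then show "\<exists>r. QI (sC z q) r" using R L unfolding QI_def by auto
  qed
  have "1/2 * norm q < 1" by (rule SR[OF sq _ ex]) simp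
  then show ?thesis by simp
qed

end

context cstar begin

lemma AU:
  assumes p: "positive sC st p" and e: "\<epsilon> > 0"
  shows "\<exists>w. norm (p - p * p * w) < \<epsilon> \<and> norm (p - w * p * p) < \<epsilon> \<and> norm (p - p * w * p) < \<epsilon>"
proof -
  define t where "t = \<epsilon> / 7"
  have t: "t > 0" using e unfolding t_def by simp
  define c where "c = - 1 / t"
  have "complex_of_real c \<notin> complex_of_real ` {0<..}"
  proof
    assume "complex_of_real c \<in> complex_of_real ` {0<..}"
    then obtain s where s: "s > 0" "complex_of_real c = complex_of_real s" by auto
    hence "c = s" by (metis of_real_eq_iff)
    moreover have "c < 0" using t unfolding c_def by simp
    ultimately show False using s by simp
  qed
  then obtain q where Q: "QI (sC (complex_of_real c) p) q" using pos_QI[OF p] by blast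
  have nq: "norm q < 2" using q_bound[OF p t] Q unfolding c_def by simp
  have r: "q = c *\<^sub>R p + (c *\<^sub>R p) * q" and l: "q = c *\<^sub>R p + q * (c *\<^sub>R p)"
    using Q unfolding QI_def sC_real by (auto dest: rqiD lqiD)
  have c0: "c \<noteq> 0" using t unfolding c_def by simp
  have qr: "q = c *\<^sub>R (p + p * q)" using r by (simp add: scaleR_add_right)
  have ql: "q = c *\<^sub>R (p + q * p)" using l by (simp add: scaleR_add_right)
  have "c *\<^sub>R p + c *\<^sub>R (p * q) = c *\<^sub>R p + c *\<^sub>R (q * p)" using r l by (simp add: mult_scaleR_left mult_scaleR_right)
  hence "c *\<^sub>R (p * q) = c *\<^sub>R (q * p)" by (rule add_left_imp_eq)
  hence pq: "p * q = q * p" using c0 by simp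
  have pt: "p + p * q = (- t) *\<^sub>R q"
  proof -
    have "(- t) *\<^sub>R q = ((- t) * c) *\<^sub>R (p + p * q)" by (subst qr) simp
    also have "(- t) * c = 1" using t unfolding c_def by simp
    finally show ?thesis by simp
  qed
  define E where "E = p * q * q"
  define w where "w = c *\<^sub>R (q + q * q)"
  have "p - E = (p + p * q) - (p + p * q) * q" unfolding E_def by (simp add: algebra_simps)
  also have "\<dots> = (- t) *\<^sub>R q + t *\<^sub>R (q * q)" unfolding pt by simp
  finally have "norm (p - E) \<le> t * norm q + t * norm (q * q)"
    using norm_triangle_ineq[of "(- t) *\<^sub>R q" "t *\<^sub>R (q * q)"] t by simp
  also have "\<dots> \<le> t * 2 + t * 4"
  proof -
    have "norm (q * q) \<le> norm q * norm q" by (rule norm_mult_ineq)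
    also have "\<dots> \<le> 2 * 2" using nq by (intro mult_mono) auto
    finally show ?thesis using nq t by (intro add_mono mult_left_mono) auto
  qed
  also have "\<dots> < \<epsilon>" unfolding t_def using e by simp
  finally have nE: "norm (p - E) < \<epsilon>" .
  have E1: "E = p * p * w"
  proof -
    have "E = p * q * q" unfolding E_def ..
    also have "\<dots> = p * (c *\<^sub>R (p + p * q)) * q" by (subst qr) simp
    also have "\<dots> = c *\<^sub>R (p * p * q + p * p * q * q)" by (simp add: algebra_simps)
    also have "\<dots> = p * p * w" unfolding w_def by (simp add: algebra_simps)
    finally show ?thesis .
  qed
  have E2: "E = w * p * p"
  proof -
    have "E = q * q * p" unfolding E_def by (simp add: mult.assoc pq)
    also have "\<dots> = (c *\<^sub>R (p + q * p)) * q * p" by (subst ql) simp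
    also have "\<dots> = c *\<^sub>R (p * q * p + q * p * q * p)" by (simp add: algebra_simps)
    also have "p * q * p = q * p * p" by (simp add: pq)
    also have "q * p * q * p = q * q * p * p"
    proof -
      have "q * p * q * p = q * (p * q) * p" by (simp add: mult.assoc)
      also have "\<dots> = q * (q * p) * p" by (simp only: pq)
      finally show ?thesis by (simp add: mult.assoc)
    qed
    also have "c *\<^sub>R (q * p * p + q * q * p * p) = w * p * p" unfolding w_def by (simp add: algebra_simps)
    finally show ?thesis .
  qed
  have E3: "E = p * w * p"
  proof -
    have a: "p * q * p = p * p * q" by (simp add: mult.assoc pq[symmetric])
    have b: "p * (q * q) * p = p * p * (q * q)"
    proof -
      have "p * (q * q) * p = p * q * (q * p)" by (simp add: mult.assoc)
      also have "\<dots> = p * q * (p * q)" by (simp only: pq)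
      also have "\<dots> = p * (q * p) * q" by (simp add: mult.assoc)
      also have "\<dots> = p * (p * q) * q" by (simp only: pq)
      finally show ?thesis by (simp add: mult.assoc)
    qed
    have "p * w * p = c *\<^sub>R (p * q * p + p * (q * q) * p)" unfolding w_def by (simp add: algebra_simps)
    also have "\<dots> = c *\<^sub>R (p * p * q + p * p * (q * q))" unfolding a b ..
    also have "\<dots> = p * p * w" unfolding w_def by (simp add: algebra_simps)
    finally show ?thesis using E1 by simp
  qed
  show ?thesis using nE E1 E2 E3 by metis
qed

lemma AU_cl:
  assumes p: "positive sC st p"
  shows "p \<in> closure {p * p * w |w. True}" "p \<in> closure {w * p * p |w. True}" "p \<in> closure {p * w * p |w. True}"
proof -
  have "\<exists>y\<in>{p * p * w |w. True}. dist y p < e" if "e > 0" for e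
    using AU[OF p that] by (auto simp: dist_norm norm_minus_commute)
  then show "p \<in> closure {p * p * w |w. True}" unfolding closure_approachable by blast
  have "\<exists>y\<in>{w * p * p |w. True}. dist y p < e" if "e > 0" for e
    using AU[OF p that] by (auto simp: dist_norm norm_minus_commute)
  then show "p \<in> closure {w * p * p |w. True}" unfolding closure_approachable by blast
  have "\<exists>y\<in>{p * w * p |w. True}. dist y p < e" if "e > 0" for e
    using AU[OF p that] by (auto simp: dist_norm norm_minus_commute)
  then show "p \<in> closure {p * w * p |w. True}" unfolding closure_approachable by blast
qed

end

lemma cl_map:
  assumes "continuous_on UNIV f" "\<forall>x\<in>S. f x \<in> closure T" "y \<in> closure S"
  shows "f y \<in> closure T"
proof -
  have "f ` closure S \<subseteq> closure T"
    by (rule image_closure_subset) (use assms in \<open>auto intro: continuous_on_subset\<close>)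
  then show ?thesis using assms(3) by blast
qed

lemma cl_sandwich:
  fixes y y' z :: "'a::real_normed_algebra"
  assumes "y \<in> closure S" "y' \<in> closure S'" "\<forall>s\<in>S. \<forall>s'\<in>S'. s * z * s' \<in> closure T"
  shows "y * z * y' \<in> closure T"
proof -
  have "\<forall>s\<in>S. s * z * y' \<in> closure T"
  proof
    fix s assume s: "s \<in> S"
    show "s * z * y' \<in> closure T"
      by (rule cl_map[of "\<lambda>u. s * z * u" S']) (use assms s in \<open>auto intro!: continuous_intros\<close>)
  qed
  then show ?thesis
    by (intro cl_map[of "\<lambda>u. u * z * y'" S]) (use assms in \<open>auto intro!: continuous_intros\<close>)
qed

lemma cl_prod:
  fixes y y' :: "'a::real_normed_algebra"
  assumes "y \<in> closure S" "y' \<in> closure S'" "\<forall>s\<in>S. \<forall>s'\<in>S'. s * s' \<in> closure T"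
  shows "y * y' \<in> closure T"
proof -
  have "\<forall>s\<in>S. s * y' \<in> closure T"
  proof
    fix s assume s: "s \<in> S"
    show "s * y' \<in> closure T"
      by (rule cl_map[of "\<lambda>u. s * u" S']) (use assms s in \<open>auto intro!: continuous_intros\<close>)
  qed
  then show ?thesis
    by (intro cl_map[of "\<lambda>u. u * y'" S]) (use assms in \<open>auto intro!: continuous_intros\<close>)
qed

lemma cl_add:
  fixes y y' :: "'a::real_normed_vector"
  assumes "y \<in> closure S" "y' \<in> closure S" "\<forall>s\<in>S. \<forall>s'\<in>S. s + s' \<in> S"
  shows "y + y' \<in> closure S"
proof -
  have "\<forall>s\<in>S. s + y' \<in> closure S"
  proof
    fix s assume s: "s \<in> S"
    show "s + y' \<in> closure S"
      by (rule cl_map[of "\<lambda>u. s + u" S]) (use assms s in \<open>auto intro!: continuous_intros closure_subset[THEN subsetD]\<close>)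
  qed
  then show ?thesis
    by (intro cl_map[of "\<lambda>u. u + y'" S]) (use assms in \<open>auto intro!: continuous_intros\<close>)
qed

fun mp :: "nat \<Rightarrow> 'a::real_normed_algebra \<Rightarrow> 'a" where
  "mp 0 w = w" | "mp (Suc n) w = w * mp n w"

lemma mp_comm: "mp (Suc n) w = mp n w * w"
proof (induction n)
  case (Suc n)
  have "mp (Suc (Suc n)) w = w * (w * mp n w)" by simp
  also have "\<dots> = w * (mp n w * w)" using Suc by simp
  also have "\<dots> = mp (Suc n) w * w" by (simp add: mult.assoc)
  finally show ?case .
qed simp

lemma norm_mp: "norm (mp n w) \<le> norm w ^ Suc n"
proof (induction n)
  case (Suc n)
  have "norm (w * mp n w) \<le> norm w * norm (mp n w)" by (rule norm_mult_ineq)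
  also have "\<dots> \<le> norm w * norm w ^ Suc n" using Suc by (intro mult_left_mono) auto
  finally show ?case by simp
qed simp

lemma neumann:
  fixes w :: "'a::{banach,real_normed_algebra}"
  assumes w1: "norm w < 1" and B: "closed B" "w \<in> B" "0 \<in> B" "\<forall>x\<in>B. \<forall>y\<in>B. x + y \<in> B" "\<forall>x\<in>B. \<forall>y\<in>B. x * y \<in> B"
  shows "QI w (suminf (\<lambda>n. mp n w)) \<and> suminf (\<lambda>n. mp n w) \<in> B"
proof -
  define r where "r = suminf (\<lambda>n. mp n w)"
  have sg: "summable (\<lambda>n. norm w ^ Suc n)" using w1 by (simp add: summable_geometric)
  have sm: "summable (\<lambda>n. mp n w)" by (rule summable_comparison_test'[OF sg norm_mp])
  have "w * r = (\<Sum>n. w * mp n w)" unfolding r_def by (rule suminf_mult[OF sm, symmetric])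
  also have "\<dots> = (\<Sum>n. mp (Suc n) w)" by simp
  also have "\<dots> = r - w" unfolding r_def using suminf_split_head[OF sm] by simp
  finally have R: "w * r = r - w" .
  have "r * w = (\<Sum>n. mp n w * w)" unfolding r_def by (rule suminf_mult2[OF sm])
  also have "\<dots> = (\<Sum>n. mp (Suc n) w)" by (simp only: mp_comm)
  also have "\<dots> = r - w" unfolding r_def using suminf_split_head[OF sm] by simp
  finally have L: "r * w = r - w" .
  have QIr: "QI w r" unfolding QI_def rqi_def lqi_def using R L by simp
  have mpB: "mp n w \<in> B" for n by (induction n) (use B in auto)
  have psB: "(\<Sum>i<n. mp i w) \<in> B" for n by (induction n) (use B mpB in auto)
  have "r \<in> B" unfolding r_def
    by (rule closed_sequentially[OF B(1) _ summable_LIMSEQ[OF sm]]) (rule psB)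
  then show ?thesis using QIr unfolding r_def by blast
qed

context cstar begin

lemma sC_cont: "continuous_on UNIV (sC z)"
proof -
  have "bounded_linear (sC z)"
  proof
    show "sC z (x + y) = sC z x + sC z y" for x y by (rule sC_addR)
    show "sC z (r *\<^sub>R x) = r *\<^sub>R sC z x" for r x by (rule sC_scaleR)
    show "\<exists>K. \<forall>x. norm (sC z x) \<le> norm x * K" by (intro exI[of _ "cmod z"]) (simp add: norm_sC)
  qed
  then show ?thesis by (rule linear_continuous_on)
qed

lemma cl_sC:
  assumes "y \<in> closure S" "\<forall>s\<in>S. sC z s \<in> S"
  shows "sC z y \<in> closure S"
  by (rule cl_map[of "sC z" S]) (use assms sC_cont in \<open>auto intro: closure_subset[THEN subsetD]\<close>)

lemma csubspace_closure:
  assumes "csubspace sC S" shows "csubspace sC (closure S)"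
  using assms unfolding csubspace_def
  by (auto intro: cl_add cl_sC closure_subset[THEN subsetD])

lemma csubspace_hered: "csubspace sC (hered p)"
  unfolding hered_def
proof (rule csubspace_closure)
  show "csubspace sC {p * x * p |x. True}" unfolding csubspace_def
  proof (intro conjI ballI allI)
    show "0 \<in> {p * x * p |x. True}" by (rule CollectI, rule exI[of _ 0]) simp
    fix u v assume "u \<in> {p * x * p |x. True}" "v \<in> {p * x * p |x. True}"
    then obtain x y where "u = p * x * p" "v = p * y * p" by blast
    then show "u + v \<in> {p * x * p |x. True}" by (auto intro!: exI[of _ "x + y"] simp: algebra_simps)
  next
    fix z u assume "u \<in> {p * x * p |x. True}"
    then obtain x where "u = p * x * p" by blast
    then show "sC z u \<in> {p * x * p |x. True}"
      by (auto intro!: exI[of _ "sC z x"] simp: sC_multL[symmetric] sC_multR[symmetric])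
  qed
qed

lemma hered_G:
  assumes "y \<in> closure {c * x |x. True}" "y' \<in> closure {x * c |x. True}"
  shows "y * z * y' \<in> hered c"
  unfolding hered_def
proof (rule cl_sandwich[OF assms], intro ballI)
  fix s s' assume "s \<in> {c * x |x. True}" "s' \<in> {x * c |x. True}"
  then obtain x1 x2 where "s = c * x1" "s' = x2 * c" by blast
  hence "s * z * s' = c * (x1 * z * x2) * c" by (simp add: mult.assoc)
  then show "s * z * s' \<in> closure {c * x * c |x. True}" by (auto intro: closure_subset[THEN subsetD])
qed

lemma hered_G0:
  assumes "y \<in> closure {c * x |x. True}" "y' \<in> closure {x * c |x. True}"
  shows "y * y' \<in> hered c"
  unfolding hered_def
proof (rule cl_prod[OF assms], intro ballI)
  fix s s' assume "s \<in> {c * x |x. True}" "s' \<in> {x * c |x. True}"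
  then obtain x1 x2 where "s = c * x1" "s' = x2 * c" by blast
  hence "s * s' = c * (x1 * x2) * c" by (simp add: mult.assoc)
  then show "s * s' \<in> closure {c * x * c |x. True}" by (auto intro: closure_subset[THEN subsetD])
qed

lemma hered_subL: "hered c \<subseteq> closure {c * x |x. True}"
  unfolding hered_def by (rule closure_mono) (auto simp: mult.assoc)
lemma hered_subR: "hered c \<subseteq> closure {x * c |x. True}"
  unfolding hered_def by (rule closure_mono) auto

lemma hered_mult: "y1 \<in> hered c \<Longrightarrow> y2 \<in> hered c \<Longrightarrow> y1 * y2 \<in> hered c"
  using hered_G0 hered_subL hered_subR by blast
lemma hered_sand: "y1 \<in> hered c \<Longrightarrow> y2 \<in> hered c \<Longrightarrow> y1 * z * y2 \<in> hered c"
  using hered_G hered_subL hered_subR by blast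
lemma closed_hered: "closed (hered c)" unfolding hered_def by simp
lemma hered_gen: "c * x * c \<in> hered c" unfolding hered_def by (auto intro: closure_subset[THEN subsetD])

end

lemma QI_sum:
  fixes A B ra rb :: "'a::ring"
  assumes QA: "QI A ra" and QB: "QI B rb" and AB: "A * B = 0" and BA: "B * A = 0"
  shows "QI (A + B) (ra + rb + rb * ra)"
proof -
  have ra1: "ra = A + A * ra" and ra2: "ra = A + ra * A" using QA unfolding QI_def by (auto dest: rqiD lqiD)
  have rb1: "rb = B + B * rb" and rb2: "rb = B + rb * B" using QB unfolding QI_def by (auto dest: rqiD lqiD)
  have Arb: "A * rb = 0"
  proof -
    have "A * rb = A * B + A * B * rb" by (subst rb1) (simp add: algebra_simps)
    then show ?thesis using AB by simp
  qed
  have Bra: "B * ra = 0"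
  proof -
    have "B * ra = B * A + B * A * ra" by (subst ra1) (simp add: algebra_simps)
    then show ?thesis using BA by simp
  qed
  have raB: "ra * B = 0"
  proof -
    have "ra * B = A * B + ra * (A * B)" by (subst ra2) (simp add: algebra_simps)
    then show ?thesis using AB by simp
  qed
  have rbA: "rb * A = 0"
  proof -
    have "rb * A = B * A + rb * (B * A)" by (subst rb2) (simp add: algebra_simps)
    then show ?thesis using BA by simp
  qed
  have Ara: "A * ra = ra - A" using ra1 by (simp add: algebra_simps)
  have Brb: "B * rb = rb - B" using rb1 by (simp add: algebra_simps)
  have raA: "ra * A = ra - A" using ra2 by (simp add: algebra_simps)
  have rbB: "rb * B = rb - B" using rb2 by (simp add: algebra_simps)
  have "(A + B) * (ra + rb + rb * ra) = A * ra + A * rb + (A * rb) * ra + B * ra + B * rb + (B * rb) * ra"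
    by (simp add: algebra_simps)
  also have "\<dots> = (ra - A) + (rb - B) + rb * ra"
    unfolding Ara Arb Bra Brb by (simp add: algebra_simps Bra)
  finally have R: "(A + B) * (ra + rb + rb * ra) = (ra - A) + (rb - B) + rb * ra" .
  have "(ra + rb + rb * ra) * (A + B) = ra * A + ra * B + rb * A + rb * B + rb * (ra * A) + rb * (ra * B)"
    by (simp add: algebra_simps)
  also have "\<dots> = (ra - A) + (rb - B) + rb * ra"
    unfolding raA raB rbA rbB by (simp add: algebra_simps rbA)
  finally have L: "(ra + rb + rb * ra) * (A + B) = (ra - A) + (rb - B) + rb * ra" .
  show ?thesis unfolding QI_def rqi_def lqi_def R L by (simp add: algebra_simps)
qed

context cstar begin

lemma ba0: "a * b = 0 \<Longrightarrow> positive sC st a \<Longrightarrow> positive sC st b \<Longrightarrow> b * a = 0"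
  using st_mult[of a b] unfolding positive_def by auto

lemma pos_sum:
  assumes pa: "positive sC st a" and pb: "positive sC st b" and ab: "a * b = 0"
  shows "positive sC st (a + b)"
  unfolding positive_def
proof (intro conjI allI impI)
  have ba: "b * a = 0" by (rule ba0[OF ab pa pb])
  show "st (a + b) = a + b" using pa pb unfolding positive_def by (simp add: st_add)
  fix l :: complex assume l: "l \<notin> complex_of_real ` {0..}"
  have l0: "l \<noteq> 0" using l by (metis atLeast_iff image_eqI of_real_0 order_refl)
  define \<mu> where "\<mu> = 1 / l"
  have mu: "\<mu> \<notin> complex_of_real ` {0<..}"
  proof
    assume "\<mu> \<in> complex_of_real ` {0<..}"
    then obtain s where s: "s > 0" "\<mu> = complex_of_real s" by auto
    have "l = 1 / (1 / l)" by simp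
    also have "1 / l = complex_of_real s" using s unfolding \<mu>_def by simp
    finally have "l = 1 / complex_of_real s" .
    hence "l = complex_of_real (1 / s)" by simp
    moreover have "1 / s \<ge> 0" using s by simp
    ultimately show False using l by blast
  qed
  obtain ra where QA: "QI (sC \<mu> a) ra" using pos_QI[OF pa mu] by blast
  obtain rb where QB: "QI (sC \<mu> b) rb" using pos_QI[OF pb mu] by blast
  have AB: "sC \<mu> a * sC \<mu> b = 0" by (simp add: sC_multL[symmetric] sC_multR[symmetric] ab)
  have BA: "sC \<mu> b * sC \<mu> a = 0" by (simp add: sC_multL[symmetric] sC_multR[symmetric] ba)
  define r where "r = ra + rb + rb * ra"
  have Q: "QI (sC \<mu> (a + b)) r" unfolding r_def sC_addR by (rule QI_sum[OF QA QB AB BA])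
  have lm: "l * \<mu> = 1" unfolding \<mu>_def using l0 by simp
  have e1: "sC l (sC \<mu> r) = r" by (simp add: sC_sC lm sC_one)
  have e2: "(a + b) * sC \<mu> r = sC \<mu> (a + b) * r" by (simp add: sC_multL[symmetric] sC_multR[symmetric])
  have e3: "sC \<mu> r * (a + b) = r * sC \<mu> (a + b)" by (simp add: sC_multL[symmetric] sC_multR[symmetric])
  have e4: "sC (1 / l) (a + b) = sC \<mu> (a + b)" unfolding \<mu>_def ..
  show "\<exists>c. sC l c - sC (1 / l) (a + b) - (a + b) * c = 0 \<and> sC l c - sC (1 / l) (a + b) - c * (a + b) = 0"
  proof (intro exI[of _ "sC \<mu> r"])
    have "r - sC \<mu> (a + b) - sC \<mu> (a + b) * r = 0" "r - sC \<mu> (a + b) - r * sC \<mu> (a + b) = 0"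
      using Q unfolding QI_def rqi_def lqi_def by auto
    then show "sC l (sC \<mu> r) - sC (1 / l) (a + b) - (a + b) * sC \<mu> r = 0 \<and>
      sC l (sC \<mu> r) - sC (1 / l) (a + b) - sC \<mu> r * (a + b) = 0" unfolding e1 e2 e3 e4 by blast
  qed
qed

end

locale qsetup = cstar sC st
  for sC :: "complex \<Rightarrow> 'a::{banach,real_normed_algebra} \<Rightarrow> 'a" and st +
  fixes a b :: 'a and I :: "'a set" and e :: 'a
  assumes pa: "positive sC st a" and pb: "positive sC st b" and ab: "a * b = 0"
    and aI: "a \<in> ideal_gen sC b"
    and Iid: "closed_ideal_of sC (hered (a + b)) I" and IB: "I \<noteq> hered (a + b)"
    and eB: "e \<in> hered (a + b)" and eU: "\<forall>x\<in>hered (a + b). e * x - x \<in> I \<and> x * e - x \<in> I"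
begin

abbreviation "c \<equiv> a + b"
abbreviation "B \<equiv> hered (a + b)"
abbreviation "D \<equiv> hered b"

lemma ba: "b * a = 0" by (rule ba0[OF ab pa pb])
lemma pc: "positive sC st c" by (rule pos_sum[OF pa pb ab])
lemma cb: "c * b = b * b" by (simp add: distrib_right ab)
lemma bc: "b * c = b * b" by (simp add: distrib_left ba)
lemma ca: "c * a = a * a" by (simp add: distrib_right ba)
lemma ac: "a * c = a * a" by (simp add: distrib_left ab)

lemma I_sub: "I \<subseteq> B" and I_cs: "csubspace sC I" and I_closed: "closed I"
  and I_L: "x \<in> B \<Longrightarrow> y \<in> I \<Longrightarrow> x * y \<in> I" and I_R: "x \<in> B \<Longrightarrow> y \<in> I \<Longrightarrow> y * x \<in> I"
  using Iid unfolding closed_ideal_of_def by auto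

lemma I_add: "x \<in> I \<Longrightarrow> y \<in> I \<Longrightarrow> x + y \<in> I" using I_cs unfolding csubspace_def by blast
lemma I_neg: "x \<in> I \<Longrightarrow> - x \<in> I"
proof -
  assume "x \<in> I"
  hence "sC (-1) x \<in> I" using I_cs unfolding csubspace_def by blast
  thus "- x \<in> I" by (simp add: sC_negc sC_one)
qed
lemma I_diff: "x \<in> I \<Longrightarrow> y \<in> I \<Longrightarrow> x - y \<in> I" using I_add[of x "-y"] I_neg[of y] by simp
lemma I_0: "0 \<in> I" using I_cs unfolding csubspace_def by blast

definition cg where "cg x y \<longleftrightarrow> x - y \<in> I"
lemma cg_refl: "cg x x" unfolding cg_def by (simp add: I_0)
lemma cg_sym: "cg x y \<Longrightarrow> cg y x" unfolding cg_def using I_neg[of "x - y"] by simp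
lemma cg_trans: "cg x y \<Longrightarrow> cg y z \<Longrightarrow> cg x z" unfolding cg_def using I_add[of "x - y" "y - z"] by simp
lemma cg_L: "u \<in> B \<Longrightarrow> cg x y \<Longrightarrow> cg (u * x) (u * y)" unfolding cg_def using I_L[of u "x - y"] by (simp add: right_diff_distrib)
lemma cg_R: "u \<in> B \<Longrightarrow> cg x y \<Longrightarrow> cg (x * u) (y * u)" unfolding cg_def using I_R[of u "x - y"] by (simp add: left_diff_distrib)
lemma cg_eL: "x \<in> B \<Longrightarrow> cg (e * x) x" unfolding cg_def using eU by blast
lemma cg_eR: "x \<in> B \<Longrightarrow> cg (x * e) x" unfolding cg_def using eU by blast
lemma cg_I: "x \<in> I \<Longrightarrow> cg x y \<Longrightarrow> y \<in> I" unfolding cg_def using I_diff[of x "x - y"] by simp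

lemma B_add: "x \<in> B \<Longrightarrow> y \<in> B \<Longrightarrow> x + y \<in> B" using csubspace_hered unfolding csubspace_def by blast
lemma B_0: "0 \<in> B" using csubspace_hered unfolding csubspace_def by blast
lemma B_diff: "x \<in> B \<Longrightarrow> y \<in> B \<Longrightarrow> x - y \<in> B"
proof -
  assume "x \<in> B" "y \<in> B"
  have "sC (-1) y \<in> B" using \<open>y \<in> B\<close> csubspace_hered unfolding csubspace_def by blast
  hence "- y \<in> B" by (simp add: sC_negc sC_one)
  hence "x + - y \<in> B" using B_add \<open>x \<in> B\<close> by blast
  thus ?thesis by simp
qed

lemma b_cL: "b \<in> closure {c * x |x. True}"
proof -
  have "{b * b * w |w. True} \<subseteq> {c * x |x. True}"
  proof
    fix y assume "y \<in> {b * b * w |w. True}"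
    then obtain w where "y = b * b * w" by blast
    hence "y = c * (b * w)" by (simp add: mult.assoc[symmetric] cb)
    thus "y \<in> {c * x |x. True}" by blast
  qed
  thus ?thesis using AU_cl(1)[OF pb] closure_mono by blast
qed
lemma b_cR: "b \<in> closure {x * c |x. True}"
proof -
  have "{w * b * b |w. True} \<subseteq> {x * c |x. True}"
  proof
    fix y assume "y \<in> {w * b * b |w. True}"
    then obtain w where "y = w * b * b" by blast
    hence "y = (w * b) * c" by (simp add: mult.assoc bc)
    thus "y \<in> {x * c |x. True}" by blast
  qed
  thus ?thesis using AU_cl(2)[OF pb] closure_mono by blast
qed
lemma a_cL: "a \<in> closure {c * x |x. True}"
proof -
  have "{a * a * w |w. True} \<subseteq> {c * x |x. True}"
  proof
    fix y assume "y \<in> {a * a * w |w. True}"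
    then obtain w where "y = a * a * w" by blast
    hence "y = c * (a * w)" by (simp add: mult.assoc[symmetric] ca)
    thus "y \<in> {c * x |x. True}" by blast
  qed
  thus ?thesis using AU_cl(1)[OF pa] closure_mono by blast
qed
lemma a_cR: "a \<in> closure {x * c |x. True}"
proof -
  have "{w * a * a |w. True} \<subseteq> {x * c |x. True}"
  proof
    fix y assume "y \<in> {w * a * a |w. True}"
    then obtain w where "y = w * a * a" by blast
    hence "y = (w * a) * c" by (simp add: mult.assoc ac)
    thus "y \<in> {x * c |x. True}" by blast
  qed
  thus ?thesis using AU_cl(2)[OF pa] closure_mono by blast
qed
lemma c_cL: "c \<in> closure {c * x |x. True}"
proof -
  have "{c * c * w |w. True} \<subseteq> {c * x |x. True}" by (auto simp: mult.assoc)
  thus ?thesis using AU_cl(1)[OF pc] closure_mono by blast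
qed
lemma c_cR: "c \<in> closure {x * c |x. True}"
proof -
  have "{w * c * c |w. True} \<subseteq> {x * c |x. True}" by auto
  thus ?thesis using AU_cl(2)[OF pc] closure_mono by blast
qed

lemma in_B:
  assumes "y \<in> closure {c * x |x. True}" "y \<in> closure {x * c |x. True}" "y \<in> closure {y * w * y |w. True}"
  shows "y \<in> B"
proof -
  have "{y * w * y |w. True} \<subseteq> B" using hered_G[OF assms(1,2)] by blast
  hence "closure {y * w * y |w. True} \<subseteq> B" using closed_hered closure_minimal by blast
  thus ?thesis using assms(3) by blast
qed

lemma aB: "a \<in> B" by (rule in_B[OF a_cL a_cR AU_cl(3)[OF pa]])
lemma bB: "b \<in> B" by (rule in_B[OF b_cL b_cR AU_cl(3)[OF pb]])
lemma cB: "c \<in> B" by (rule in_B[OF c_cL c_cR AU_cl(3)[OF pc]])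
lemma bD: "b \<in> D" using AU_cl(3)[OF pb] unfolding hered_def .

lemma DB: "D \<subseteq> B"
proof -
  have "{b * x * b |x. True} \<subseteq> B" using hered_G[OF b_cL b_cR] by blast
  thus ?thesis unfolding hered_def[of b] by (rule closure_minimal[OF _ closed_hered])
qed

end

context qsetup begin

declare cg_trans[trans]

lemma B_mult: "x \<in> B \<Longrightarrow> y \<in> B \<Longrightarrow> x * y \<in> B" by (rule hered_mult)

lemma e_approx: "e \<in> closure {c * y * c |y. y \<in> B}"
proof -
  let ?T = "{c * y * c |y. y \<in> B}"
  have gen: "c * x * c \<in> closure ?T" for x
  proof (rule cl_sandwich[OF AU_cl(1)[OF pc] AU_cl(2)[OF pc]], intro ballI)
    fix s s' assume "s \<in> {c * c * w |w. True}" "s' \<in> {w * c * c |w. True}"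
    then obtain w1 w2 where "s = c * c * w1" "s' = w2 * c * c" by blast
    hence "s * x * s' = c * (c * (w1 * x * w2) * c) * c" by (simp add: mult.assoc)
    moreover have "c * (w1 * x * w2) * c \<in> B" by (rule hered_gen)
    ultimately show "s * x * s' \<in> closure ?T" by (auto intro: closure_subset[THEN subsetD])
  qed
  have Bdef: "B = closure {c * x * c |x. True}" by (simp only: hered_def)
  have "closure {c * x * c |x. True} \<subseteq> closure ?T"
    by (rule closure_minimal) (use gen in auto)
  moreover have "e \<in> closure {c * x * c |x. True}" using eB by (subst (asm) Bdef)
  ultimately show ?thesis by blast
qed

lemma exists_v: "\<exists>v\<in>B. cg (c * v) e \<and> cg (v * c) e"
proof -
  obtain z where z: "z \<in> {c * y * c |y. y \<in> B}" "dist z e < 1"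
    using e_approx unfolding closure_approachable by (meson zero_less_one)
  then obtain y where y: "y \<in> B" "z = c * y * c" by blast
  have zB: "z \<in> B" using y cB B_mult by auto
  define w0 where "w0 = e - z"
  have w0B: "w0 \<in> B" unfolding w0_def using eB zB by (rule B_diff)
  have nw0: "norm w0 < 1" using z unfolding w0_def by (simp add: dist_norm norm_minus_commute)
  obtain r where Qr: "QI w0 r" and rB: "r \<in> B"
    using neumann[OF nw0 closed_hered w0B B_0] B_add B_mult by blast
  have wr: "w0 * r = r - w0" and rw: "r * w0 = r - w0"
    using Qr unfolding QI_def rqi_def lqi_def by (auto simp: algebra_simps)
  define s where "s = e + r"
  have sB: "s \<in> B" unfolding s_def using eB rB by (rule B_add)
  have zeq: "z = e - w0" unfolding w0_def by simp
  have zs: "cg (z * s) e"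
  proof -
    have eq: "z * s - e = (e * e - e) + (e * r - r) - (w0 * e - w0)"
      unfolding zeq s_def by (simp add: algebra_simps wr)
    have h: "e * e - e \<in> I" "e * r - r \<in> I" "w0 * e - w0 \<in> I" using eU eB rB w0B by auto
    show ?thesis unfolding cg_def eq by (rule I_diff[OF I_add[OF h(1,2)] h(3)])
  qed
  have sz: "cg (s * z) e"
  proof -
    have eq: "s * z - e = (e * e - e) - (e * w0 - w0) + (r * e - r)"
      unfolding zeq s_def by (simp add: algebra_simps rw)
    have h: "e * e - e \<in> I" "r * e - r \<in> I" "e * w0 - w0 \<in> I" using eU eB rB w0B by auto
    show ?thesis unfolding cg_def eq by (rule I_add[OF I_diff[OF h(1,3)] h(2)])
  qed
  define v where "v = y * c * s"
  define v' where "v' = s * c * y"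
  have vB: "v \<in> B" unfolding v_def using y(1) cB sB by (intro B_mult)
  have v'B: "v' \<in> B" unfolding v'_def using y(1) cB sB by (intro B_mult)
  have cv: "cg (c * v) e" using zs unfolding v_def y(2) by (simp add: mult.assoc)
  have v'c: "cg (v' * c) e" using sz unfolding v'_def y(2) by (simp add: mult.assoc)
  have "cg v' (v' * e)" by (rule cg_sym[OF cg_eR[OF v'B]])
  also have "cg (v' * e) (v' * (c * v))" by (rule cg_L[OF v'B cg_sym[OF cv]])
  also have "v' * (c * v) = (v' * c) * v" by (simp add: mult.assoc)
  also have "cg ((v' * c) * v) (e * v)" by (rule cg_R[OF vB v'c])
  also have "cg (e * v) v" by (rule cg_eL[OF vB])
  finally have vv: "cg v' v" .
  have "cg (v * c) (v' * c)" by (rule cg_R[OF cB cg_sym[OF vv]])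
  also have "cg (v' * c) e" by (rule v'c)
  finally have vc: "cg (v * c) e" .
  show ?thesis using vB cv vc by blast
qed

end

context qsetup begin

lemma D_mult: "x \<in> D \<Longrightarrow> y \<in> D \<Longrightarrow> x * y \<in> D" by (rule hered_mult)

lemma aaa_I: "a * a * a \<in> I" if DI: "D \<subseteq> I"
proof -
  let ?K = "{b * b * w * b * b |w. True}"
  have bK: "b \<in> closure ?K"
  proof -
    have "b * w * b \<in> closure ?K" for w
    proof (rule cl_sandwich[OF AU_cl(1)[OF pb] AU_cl(2)[OF pb]], intro ballI)
      fix s s' assume "s \<in> {b * b * w |w. True}" "s' \<in> {w * b * b |w. True}"
      then obtain w1 w2 where "s = b * b * w1" "s' = w2 * b * b" by blast
      hence "s * w * s' = b * b * (w1 * w * w2) * b * b" by (simp add: mult.assoc)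
      thus "s * w * s' \<in> closure ?K" by (auto intro: closure_subset[THEN subsetD])
    qed
    hence "closure {b * w * b |w. True} \<subseteq> closure ?K" by (intro closure_minimal) auto
    thus ?thesis using AU_cl(3)[OF pb] by blast
  qed
  have gen: "a * (x * b * y) * a \<in> I" for x y
  proof -
    have "(\<lambda>u. a * x * u * y * a) b \<in> closure I"
    proof (rule cl_map[of "\<lambda>u. a * x * u * y * a", OF _ _ bK])
      show "continuous_on UNIV (\<lambda>u. a * x * u * y * a)" by (intro continuous_intros)
      show "\<forall>s\<in>?K. a * x * s * y * a \<in> closure I"
      proof
        fix s assume "s \<in> ?K"
        then obtain w where "s = b * b * w * b * b" by blast
        hence "a * x * s * y * a = (a * x * b) * (b * w * b) * (b * y * a)" by (simp add: mult.assoc)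
        moreover have "a * x * b \<in> B" by (rule hered_G[OF a_cL b_cR])
        moreover have "b * y * a \<in> B" by (rule hered_G[OF b_cL a_cR])
        moreover have "b * w * b \<in> I" using DI hered_gen by blast
        ultimately have "a * x * s * y * a \<in> I" using I_L I_R by simp
        thus "a * x * s * y * a \<in> closure I" by (auto intro: closure_subset[THEN subsetD])
      qed
    qed
    thus ?thesis using I_closed by (simp add: mult.assoc)
  qed
  define T where "T = {g. a * g * a \<in> I}"
  have csT: "csubspace sC T" unfolding csubspace_def T_def
  proof (intro conjI ballI allI)
    show "0 \<in> {g. a * g * a \<in> I}" using I_0 by simp
    fix x y assume "x \<in> {g. a * g * a \<in> I}" "y \<in> {g. a * g * a \<in> I}"
    thus "x + y \<in> {g. a * g * a \<in> I}" using I_add by (simp add: algebra_simps)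
  next
    fix z x assume "x \<in> {g. a * g * a \<in> I}"
    hence "sC z (a * x * a) \<in> I" using I_cs unfolding csubspace_def by blast
    moreover have "a * sC z x * a = sC z (a * x * a)" by (simp add: sC_multL[symmetric] sC_multR[symmetric])
    ultimately show "sC z x \<in> {g. a * g * a \<in> I}" by simp
  qed
  have "{x * b * y |x y. True} \<subseteq> T" unfolding T_def using gen by auto
  hence spT: "cspan sC {x * b * y |x y. True} \<subseteq> T" unfolding cspan_def using csT by blast
  have "(\<lambda>u. a * u * a) a \<in> closure I"
  proof (rule cl_map[of "\<lambda>u. a * u * a" "cspan sC {x * b * y |x y. True}"])
    show "continuous_on UNIV (\<lambda>u. a * u * a)" by (intro continuous_intros)
    show "\<forall>x\<in>cspan sC {x * b * y |x y. True}. a * x * a \<in> closure I"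
      using spT unfolding T_def by (auto intro: closure_subset[THEN subsetD])
    show "a \<in> closure (cspan sC {x * b * y |x y. True})" using aI unfolding ideal_gen_def .
  qed
  thus ?thesis using I_closed by simp
qed

lemma J_ne: "I \<inter> D \<noteq> D"
proof
  assume "I \<inter> D = D"
  hence DI: "D \<subseteq> I" by blast
  obtain v where vB: "v \<in> B" and cv: "cg (c * v) e" and vc: "cg (v * c) e" using exists_v by blast
  have bI: "b \<in> I" using DI bD by blast
  have "cg (a * v) (c * v)"
  proof -
    have "a * v - c * v = - (b * v)" by (simp add: algebra_simps)
    moreover have "b * v \<in> I" by (rule I_R[OF vB bI])
    ultimately show ?thesis unfolding cg_def using I_neg by simp
  qed
  hence av: "cg (a * v) e" using cv cg_trans by blast
  have step: "cg (a * x * v) e" if x: "cg x e" for x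
  proof -
    have "cg (a * x * v) (a * e * v)" by (rule cg_R[OF vB cg_L[OF aB x]])
    also have "cg (a * e * v) (a * v)" by (rule cg_R[OF vB cg_eR[OF aB]])
    also have "cg (a * v) e" by (rule av)
    finally show ?thesis .
  qed
  have "cg (a * (a * (a * v) * v) * v) e" by (rule step[OF step[OF av]])
  moreover have "a * (a * (a * v) * v) * v = (a * a * a) * (v * v * v)" by (simp add: mult.assoc)
  moreover have "(a * a * a) * (v * v * v) \<in> I" by (rule I_R[OF B_mult[OF B_mult[OF vB vB] vB] aaa_I[OF DI]])
  ultimately have eI: "e \<in> I" using cg_I by metis
  have "B \<subseteq> I"
  proof
    fix x assume x: "x \<in> B"
    have "e * x \<in> I" by (rule I_R[OF x eI])
    moreover have "cg (e * x) x" by (rule cg_eL[OF x])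
    ultimately show "x \<in> I" by (rule cg_I)
  qed
  thus False using I_sub IB by blast
qed

lemma f_props: "\<exists>f\<in>D. (\<forall>x\<in>D. cg (f * x) x \<and> cg (x * f) x)"
proof -
  obtain v where vB: "v \<in> B" and cv: "cg (c * v) e" and vc: "cg (v * c) e" using exists_v by blast
  define f where "f = b * (v * v) * b"
  have fD: "f \<in> D" unfolding f_def by (rule hered_gen)
  have bvB: "b * v \<in> B" "v * b \<in> B" using bB vB by (auto intro: B_mult)
  have bbv: "cg (b * b * v) b"
  proof -
    have "cg b (b * e)" by (rule cg_sym[OF cg_eR[OF bB]])
    also have "cg (b * e) (b * (c * v))" by (rule cg_L[OF bB cg_sym[OF cv]])
    also have "b * (c * v) = b * b * v" by (simp add: mult.assoc[symmetric] bc)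
    finally show ?thesis by (rule cg_sym)
  qed
  have vbb: "cg (v * b * b) b"
  proof -
    have "cg b (e * b)" by (rule cg_sym[OF cg_eL[OF bB]])
    also have "cg (e * b) ((v * c) * b)" by (rule cg_R[OF bB cg_sym[OF vc]])
    also have "(v * c) * b = v * b * b" by (simp add: mult.assoc cb)
    finally show ?thesis by (rule cg_sym)
  qed
  have comm: "cg (v * b) (b * v)"
  proof -
    have "cg (v * b) (v * b * e)" by (rule cg_sym[OF cg_eR[OF bvB(2)]])
    also have "cg (v * b * e) (v * b * (c * v))" by (rule cg_L[OF bvB(2) cg_sym[OF cv]])
    also have "v * b * (c * v) = v * (b * c) * v" by (simp add: mult.assoc)
    also have "\<dots> = v * (c * b) * v" using bc cb by simp
    also have "\<dots> = (v * c) * (b * v)" by (simp add: mult.assoc)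
    also have "cg ((v * c) * (b * v)) (e * (b * v))" by (rule cg_R[OF bvB(1) vc])
    also have "cg (e * (b * v)) (b * v)" by (rule cg_eL[OF bvB(1)])
    finally show ?thesis .
  qed
  have bvb: "cg (b * v * b) b"
  proof -
    have "b * v * b = b * (v * b)" by (simp add: mult.assoc)
    also have "cg (b * (v * b)) (b * (b * v))" by (rule cg_L[OF bB comm])
    also have "b * (b * v) = b * b * v" by (simp add: mult.assoc)
    also have "cg (b * b * v) b" by (rule bbv)
    finally show ?thesis .
  qed
  have fb: "cg (f * b) b"
  proof -
    have "f * b = (b * v) * (v * b * b)" unfolding f_def by (simp add: mult.assoc)
    also have "cg ((b * v) * (v * b * b)) ((b * v) * b)" by (rule cg_L[OF bvB(1) vbb])
    also have "cg ((b * v) * b) b" by (rule bvb)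
    finally show ?thesis .
  qed
  have bf: "cg (b * f) b"
  proof -
    have "b * f = (b * b * v) * (v * b)" unfolding f_def by (simp add: mult.assoc)
    also have "cg ((b * b * v) * (v * b)) (b * (v * b))" by (rule cg_R[OF bvB(2) bbv])
    also have "b * (v * b) = b * v * b" by (simp add: mult.assoc)
    also have "cg (b * v * b) b" by (rule bvb)
    finally show ?thesis .
  qed
  let ?SL = "{b * y |y. y \<in> B}"
  let ?SR = "{y * b |y. y \<in> B}"
  have Dsub: "D \<subseteq> closure ?SL \<inter> closure ?SR"
  proof -
    have "b * z * b \<in> closure ?SL" for z
    proof (rule cl_map[of "\<lambda>u. u * z * b" "{b * b * w |w. True}", OF _ _ AU_cl(1)[OF pb]])
      show "continuous_on UNIV (\<lambda>u. u * z * b)" by (intro continuous_intros)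
      show "\<forall>s\<in>{b * b * w |w. True}. s * z * b \<in> closure ?SL"
      proof
        fix s assume "s \<in> {b * b * w |w. True}"
        then obtain w where "s = b * b * w" by blast
        hence "s * z * b = b * (b * (w * z) * b)" by (simp add: mult.assoc)
        moreover have "b * (w * z) * b \<in> B" using DB hered_gen by blast
        ultimately show "s * z * b \<in> closure ?SL" by (auto intro: closure_subset[THEN subsetD])
      qed
    qed
    moreover have "b * z * b \<in> closure ?SR" for z
    proof (rule cl_map[of "\<lambda>u. b * z * u" "{w * b * b |w. True}", OF _ _ AU_cl(2)[OF pb]])
      show "continuous_on UNIV (\<lambda>u. b * z * u)" by (intro continuous_intros)
      show "\<forall>s\<in>{w * b * b |w. True}. b * z * s \<in> closure ?SR"
      proof
        fix s assume "s \<in> {w * b * b |w. True}"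
        then obtain w where "s = w * b * b" by blast
        hence "b * z * s = (b * (z * w) * b) * b" by (simp add: mult.assoc)
        moreover have "b * (z * w) * b \<in> B" using DB hered_gen by blast
        ultimately show "b * z * s \<in> closure ?SR" by (auto intro: closure_subset[THEN subsetD])
      qed
    qed
    ultimately show ?thesis unfolding hered_def[of b]
      by (intro closure_minimal) auto
  qed
  have "\<forall>x\<in>D. cg (f * x) x \<and> cg (x * f) x"
  proof
    fix x assume x: "x \<in> D"
    have "(\<lambda>u. f * u - u) x \<in> closure I"
    proof (rule cl_map[of "\<lambda>u. f * u - u" ?SL])
      show "continuous_on UNIV (\<lambda>u. f * u - u)" by (intro continuous_intros)
      show "\<forall>s\<in>?SL. f * s - s \<in> closure I"
      proof
        fix s assume "s \<in> ?SL"
        then obtain y where y: "y \<in> B" "s = b * y" by blast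
        have "cg (f * b * y) (b * y)" by (rule cg_R[OF y(1) fb])
        hence "f * s - s \<in> I" unfolding cg_def y(2) by (simp add: mult.assoc)
        thus "f * s - s \<in> closure I" by (auto intro: closure_subset[THEN subsetD])
      qed
      show "x \<in> closure ?SL" using Dsub x by blast
    qed
    moreover have "(\<lambda>u. u * f - u) x \<in> closure I"
    proof (rule cl_map[of "\<lambda>u. u * f - u" ?SR])
      show "continuous_on UNIV (\<lambda>u. u * f - u)" by (intro continuous_intros)
      show "\<forall>s\<in>?SR. s * f - s \<in> closure I"
      proof
        fix s assume "s \<in> ?SR"
        then obtain y where y: "y \<in> B" "s = y * b" by blast
        have "cg (y * (b * f)) (y * b)" by (rule cg_L[OF y(1) bf])
        hence "s * f - s \<in> I" unfolding cg_def y(2) by (simp add: mult.assoc)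
        thus "s * f - s \<in> closure I" by (auto intro: closure_subset[THEN subsetD])
      qed
      show "x \<in> closure ?SR" using Dsub x by blast
    qed
    ultimately show "cg (f * x) x \<and> cg (x * f) x" using I_closed unfolding cg_def by simp
  qed
  thus ?thesis using fD by blast
qed

lemma hnuq_D: "has_nonzero_unital_quotient sC D"
  unfolding has_nonzero_unital_quotient_def
proof (intro exI[of _ "I \<inter> D"] conjI)
  show "closed_ideal_of sC D (I \<inter> D)" unfolding closed_ideal_of_def
  proof (intro conjI ballI)
    show "I \<inter> D \<subseteq> D" by blast
    show "csubspace sC (I \<inter> D)" using I_cs csubspace_hered[of b] unfolding csubspace_def by blast
    show "closed (I \<inter> D)" using I_closed closed_hered by blast
    fix x y assume x: "x \<in> D" and y: "y \<in> I \<inter> D"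
    have xB: "x \<in> B" using x DB by blast
    show "x * y \<in> I \<inter> D" using I_L[OF xB] D_mult[OF x] y by blast
    show "y * x \<in> I \<inter> D" using I_R[OF xB] D_mult[OF _ x] y by blast
  qed
  show "I \<inter> D \<noteq> D" by (rule J_ne)
  obtain f where fD: "f \<in> D" and f: "\<forall>x\<in>D. cg (f * x) x \<and> cg (x * f) x" using f_props by blast
  show "\<exists>e\<in>D. \<forall>x\<in>D. e * x - x \<in> I \<inter> D \<and> x * e - x \<in> I \<inter> D"
  proof (intro bexI[OF _ fD] ballI)
    fix x assume x: "x \<in> D"
    have "f * x \<in> D" "x * f \<in> D" using D_mult fD x by auto
    hence "f * x - x \<in> D" "x * f - x \<in> D" using x csubspace_hered[of b] unfolding csubspace_def
      by (metis diff_conv_add_uminus sC_negc sC_one)+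
    thus "f * x - x \<in> I \<inter> D \<and> x * f - x \<in> I \<inter> D" using f x unfolding cg_def by blast
  qed
qed

end

theorem proposition3p1:
  fixes sC :: "complex \<Rightarrow> 'a::{banach,real_normed_algebra} \<Rightarrow> 'a" and st :: "'a \<Rightarrow> 'a"
    and a b :: 'a
  assumes "cstar_algebra sC st"
    and "positive sC st a" and "positive sC st b"
    and "a * b = 0"
    and "a \<in> ideal_gen sC b"
    and "soft sC st b"
  shows "soft sC st (a + b)"
proof -
  interpret cstar sC st by unfold_locales (rule assms(1))
  have pc: "positive sC st (a + b)" by (rule pos_sum[OF assms(2,3,4)])
  have "\<not> has_nonzero_unital_quotient sC (hered (a + b))"
  proof
    assume "has_nonzero_unital_quotient sC (hered (a + b))"
    then obtain I e where I: "closed_ideal_of sC (hered (a + b)) I" "I \<noteq> hered (a + b)"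
      and e: "e \<in> hered (a + b)" "\<forall>x\<in>hered (a + b). e * x - x \<in> I \<and> x * e - x \<in> I"
      unfolding has_nonzero_unital_quotient_def by blast
    interpret qsetup sC st a b I e
      by unfold_locales (use assms I e in auto)
    have "has_nonzero_unital_quotient sC (hered b)" by (rule hnuq_D)
    thus False using assms(6) unfolding soft_def by blast
  qed
  thus ?thesis unfolding soft_def using pc by blast
qed

end
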